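(* Let $n\ge 2$, $p\ge 1$, $B\ge 1$ and $\theta\in[0,1]$, and consider the Complementary Pairs Stability Selection set $\hat S^{\mathrm{CPSS}}_{n,\tau}$, the sets $L_\theta$, $H_\theta$ and the procedures $\hat S_{\lfloor n/2\rfloor}$ described in the context. Then: (i) If $\tau\in(\tfrac12,1]$, then \[\mathbb{E}|\hat S^{\mathrm{CPSS}}_{n,\tau}\cap L_\theta|\le \frac{\theta}{2\tau-1}\,\mathbb{E}|\hat S_{\lfloor n/2\rfloor}\cap L_\theta|.\] (ii) Let $\hat N^{\mathrm{CPSS}}_{n,\tau}=\{1,\dots,p\}\setminus \hat S^{\mathrm{CPSS}}_{n,\tau}$ and $\hat N_{m}=\{1,\dots,p\}\setminus \hat S_{m}$. If $\tau\in[0,\tfrac12)$, then \[\mathbb{E}|\hat N^{\mathrm{CPSS}}_{n,\tau}\cap H_\theta|\le \frac{1-\theta}{1-2\tau}\,\mathbb{E}|\hat N_{\lfloor n/2\rfloor}\cap H_\theta|.\]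
   Context: Let $Z_1,\dots,Z_n$ be independent and identically distributed random elements. A variable selection procedure is a family of statistics $\hat S_m=\hat S_m(Z_1,\dots,Z_m)$, $m\ge1$, each taking values in the set of subsets of $\{1,\dots,p\}$. For $A=\{i_1<\dots<i_{|A|}\}\subseteq\{1,\dots,n\}$ write $\hat S(A):=\hat S_{|A|}(Z_{i_1},\dots,Z_{i_{|A|}})$. The selection probability of $k\in\{1,\dots,p\}$ is $p_{k,m}:=\mathbb{P}(k\in\hat S_m)$, where $\hat S_m=\hat S_m(Z_1,\dots,Z_m)$. Let $\{(A_{2j-1},A_{2j}):j=1,\dots,B\}$ be randomly chosen pairs of subsets of $\{1,\dots,n\}$, each subset of size $\lfloor n/2\rfloor$, with $A_{2j-1}\cap A_{2j}=\emptyset$, the pairs being independent of each other and of the data. Define $\hat\Pi_B(k):=\frac{1}{2B}\sum_{j=1}^{2B}\mathbb{1}_{\{k\in\hat S(A_j)\}}$ and, for $\tau\in[0,1]$, $\hat S^{\mathrm{CPSS}}_{n,\tau}:=\{k:\hat\Pi_B(k)\ge\tau\}$. For $\theta\in[0,1]$ let $L_\theta=\{k:p_{k,\lfloor n/2\rfloor}\le\theta\}$ and $H_\theta=\{k:p_{k,\lfloor n/2\rfloor}>\theta\}$. *)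

theory Defs
  imports "HOL-Probability.Probability"
begin

(* Data Z :: nat => 'a => 'b, indexed 1..n.  A selection procedure is a family
   S m :: (nat => 'b) => nat set, where S m is applied to the vector
   (z_0,...,z_{m-1}) (restricted to {..<m}).
   S(A) for A = {i_1 < ... < i_|A|} is S |A| (Z_{i_1},...,Z_{i_|A|}). *)
definition subsample_sel ::
  "(nat \<Rightarrow> (nat \<Rightarrow> 'b) \<Rightarrow> nat set) \<Rightarrow> (nat \<Rightarrow> 'a \<Rightarrow> 'b) \<Rightarrow> nat set \<Rightarrow> 'a \<Rightarrow> nat set" where
  "subsample_sel S Z A \<omega> =
     S (card A) (\<lambda>i\<in>{..<card A}. Z (sorted_list_of_set A ! i) \<omega>)"

definition sel_prob ::
  "'a measure \<Rightarrow> (nat \<Rightarrow> (nat \<Rightarrow> 'b) \<Rightarrow> nat set) \<Rightarrow> (nat \<Rightarrow> 'a \<Rightarrow> 'b) \<Rightarrow> nat \<Rightarrow> nat \<Rightarrow> real" where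
  "sel_prob M S Z k m = measure M {\<omega> \<in> space M. k \<in> subsample_sel S Z {1..m} \<omega>}"

definition Pi_hat ::
  "(nat \<Rightarrow> (nat \<Rightarrow> 'b) \<Rightarrow> nat set) \<Rightarrow> (nat \<Rightarrow> 'a \<Rightarrow> 'b) \<Rightarrow> (nat \<Rightarrow> 'a \<Rightarrow> nat set) \<Rightarrow> nat \<Rightarrow> nat \<Rightarrow> 'a \<Rightarrow> real" where
  "Pi_hat S Z A B k \<omega> =
     (\<Sum>j=1..2*B. if k \<in> subsample_sel S Z (A j \<omega>) \<omega> then 1 else 0) / real (2*B)"

definition cpss ::
  "nat \<Rightarrow> (nat \<Rightarrow> (nat \<Rightarrow> 'b) \<Rightarrow> nat set) \<Rightarrow> (nat \<Rightarrow> 'a \<Rightarrow> 'b) \<Rightarrow> (nat \<Rightarrow> 'a \<Rightarrow> nat set) \<Rightarrow> nat \<Rightarrow> real \<Rightarrow> 'a \<Rightarrow> nat set" where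
  "cpss p S Z A B \<tau> \<omega> = {k \<in> {1..p}. \<tau> \<le> Pi_hat S Z A B k \<omega>}"

definition L_set ::
  "'a measure \<Rightarrow> (nat \<Rightarrow> (nat \<Rightarrow> 'b) \<Rightarrow> nat set) \<Rightarrow> (nat \<Rightarrow> 'a \<Rightarrow> 'b) \<Rightarrow> nat \<Rightarrow> nat \<Rightarrow> real \<Rightarrow> nat set" where
  "L_set M S Z n p \<theta> = {k \<in> {1..p}. sel_prob M S Z k (n div 2) \<le> \<theta>}"

definition H_set ::
  "'a measure \<Rightarrow> (nat \<Rightarrow> (nat \<Rightarrow> 'b) \<Rightarrow> nat set) \<Rightarrow> (nat \<Rightarrow> 'a \<Rightarrow> 'b) \<Rightarrow> nat \<Rightarrow> nat \<Rightarrow> real \<Rightarrow> nat set" where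
  "H_set M S Z n p \<theta> = {k \<in> {1..p}. sel_prob M S Z k (n div 2) > \<theta>}"

definition indep_rv :: "'a measure \<Rightarrow> 'c measure \<Rightarrow> ('a \<Rightarrow> 'c) \<Rightarrow> 'd measure \<Rightarrow> ('a \<Rightarrow> 'd) \<Rightarrow> bool" where
  "indep_rv M Ma X Mb Y \<longleftrightarrow>
     (\<forall>a\<in>sets Ma. \<forall>b\<in>sets Mb.
        measure M (X -` a \<inter> Y -` b \<inter> space M)
        = measure M (X -` a \<inter> space M) * measure M (Y -` b \<inter> space M))"

end

theory Submission
  imports Defs
begin

lemma comb_ineq:
  fixes x :: "nat \<Rightarrow> real"
  assumes "\<And>j. x j = 0 \<or> x j = 1"
  shows "(\<Sum>j=1..2*B. x j) \<le> real B + (\<Sum>j=1..B. x (2*j-1) * x (2*j))"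
proof (induction B)
  case 0 then show ?case by simp
next
  case (Suc B)
  have e1: "{1..2*Suc B} = insert (Suc (Suc (2*B))) (insert (Suc (2*B)) {1..2*B})" by auto
  have "(\<Sum>j=1..2*Suc B. x j) = x (Suc (Suc (2*B))) + x (Suc (2*B)) + (\<Sum>j=1..2*B. x j)"
    unfolding e1 by (simp add: algebra_simps)
  moreover have "(\<Sum>j=1..Suc B. x (2*j-1) * x (2*j)) = (\<Sum>j=1..B. x (2*j-1) * x (2*j)) + x (Suc (2*B)) * x (Suc (Suc (2*B)))"
    by simp
  moreover have "x (Suc (Suc (2*B))) + x (Suc (2*B)) \<le> 1 + x (Suc (2*B)) * x (Suc (Suc (2*B)))"
    using assms[of "Suc (Suc (2*B))"] assms[of "Suc (2*B)"] by auto
  ultimately show ?case using Suc.IH by simp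
qed

lemma card_ind:
  assumes "finite L"
  shows "real (card (X \<inter> L)) = (\<Sum>k\<in>L. if k \<in> X then 1 else 0)"
proof -
  have "card (X \<inter> L) = card (L \<inter> X)" by (simp add: Int_commute)
  also have "\<dots> = (\<Sum>k\<in>L \<inter> X. 1)" by simp
  also have "\<dots> = (\<Sum>k\<in>L. if k \<in> X then 1 else 0)" by (rule sum.inter_restrict[OF assms])
  finally show ?thesis by (simp add: of_nat_sum[symmetric] if_distrib cong: if_cong)
qed

locale cpl = prob_space M for M :: "'a measure" +
  fixes N :: "'b measure" and Z :: "nat \<Rightarrow> 'a \<Rightarrow> 'b"
    and S :: "nat \<Rightarrow> (nat \<Rightarrow> 'b) \<Rightarrow> nat set" and n :: nat
  assumes n2: "n \<ge> 2"
    and Z_meas: "\<And>i. i \<in> {1..n} \<Longrightarrow> Z i \<in> measurable M N"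
    and Z_indep: "indep_vars (\<lambda>_. N) Z {1..n}"
    and Z_ident: "\<And>i. i \<in> {1..n} \<Longrightarrow> distr M N (Z i) = distr M N (Z 1)"
    and S_meas: "\<And>m k. (\<lambda>z. k \<in> S m z) \<in> measurable (PiM {..<m} (\<lambda>_. N)) (count_space UNIV)"
begin

definition "D = distr M N (Z 1)"
definition "V a = (\<lambda>\<omega>. \<lambda>i\<in>a. Z i \<omega>)"
definition "sg a i = sorted_list_of_set a ! i"
definition "tt a = (\<lambda>x. \<lambda>i\<in>{..<card a}. x (sg a i))"
definition "W a = (\<lambda>\<omega>. \<lambda>i\<in>{..<card a}. Z (sg a i) \<omega>)"

lemma D_prob: "prob_space D"
  unfolding D_def using n2 by (intro prob_space_distr Z_meas) auto

lemma sets_D: "sets D = sets N" and space_D: "space D = space N"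
  by (simp_all add: D_def)

lemma sg_in: "finite a \<Longrightarrow> i < card a \<Longrightarrow> sg a i \<in> a"
  unfolding sg_def using nth_mem[of i "sorted_list_of_set a"] by simp

lemma sg_inj: "finite a \<Longrightarrow> inj_on (sg a) {..<card a}"
  unfolding sg_def by (intro inj_on_nth) auto

lemma sel_eq: "subsample_sel S Z a \<omega> = S (card a) (W a \<omega>)"
  by (simp add: subsample_sel_def W_def sg_def)

lemma V_meas: "a \<subseteq> {1..n} \<Longrightarrow> V a \<in> measurable M (PiM a (\<lambda>_. N))"
  unfolding V_def by (intro measurable_restrict Z_meas) auto

lemma tt_meas: "finite a \<Longrightarrow> tt a \<in> measurable (PiM a (\<lambda>_. K)) (PiM {..<card a} (\<lambda>_. K))"
proof -
  assume fa: "finite a"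
  show ?thesis unfolding tt_def
  proof (rule measurable_restrict)
    fix i assume "i \<in> {..<card a}"
    then have "sg a i \<in> a" using sg_in[OF fa] by simp
    then show "(\<lambda>x. x (sg a i)) \<in> measurable (PiM a (\<lambda>_. K)) K"
      by (rule measurable_component_singleton)
  qed
qed

lemma W_eq: "a \<subseteq> {1..n} \<Longrightarrow> W a \<omega> = tt a (V a \<omega>)"
proof -
  assume a: "a \<subseteq> {1..n}"
  then have fa: "finite a" using finite_subset by blast
  show ?thesis unfolding W_def tt_def V_def
    by (intro restrict_ext) (simp add: sg_in[OF fa])
qed

lemma W_meas: "a \<subseteq> {1..n} \<Longrightarrow> W a \<in> measurable M (PiM {..<card a} (\<lambda>_. N))"
proof -
  assume a: "a \<subseteq> {1..n}"
  have "\<And>i. i < card a \<Longrightarrow> sg a i \<in> {1..n}"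
    using a finite_subset[of a "{1..n}"] sg_in[of a] by blast
  then show ?thesis unfolding W_def by (intro measurable_restrict Z_meas) auto
qed

lemma distr_V: assumes "a \<subseteq> {1..n}" "a \<noteq> {}"
  shows "distr M (PiM a (\<lambda>_. N)) (V a) = PiM a (\<lambda>_. D)"
proof -
  have "indep_vars (\<lambda>_. N) Z a" using indep_vars_subset[OF Z_indep assms(1)] .
  then have "distr M (PiM a (\<lambda>_. N)) (\<lambda>x. \<lambda>i\<in>a. Z i x) = PiM a (\<lambda>i. distr M N (Z i))"
  proof (subst indep_vars_iff_distr_eq_PiM'[where I=a and M'="\<lambda>_. N" and X=Z, symmetric])
    show "a \<noteq> {}" by fact
    show "\<And>i. i \<in> a \<Longrightarrow> random_variable N (Z i)" using assms(1) Z_meas by blast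
  qed assumption
  also have "\<dots> = PiM a (\<lambda>_. D)"
    unfolding D_def by (intro PiM_cong refl) (use assms(1) Z_ident in blast)
  finally show ?thesis by (simp add: V_def)
qed

lemma prob_W:
  assumes a: "a \<subseteq> {1..n}" "card a = m" "m \<ge> 1" and F: "F \<in> sets (PiM {..<m} (\<lambda>_. N))"
  shows "prob {\<omega> \<in> space M. W a \<omega> \<in> F} = measure (PiM {..<m} (\<lambda>_. D)) F"
proof -
  have fa: "finite a" using a finite_subset by blast
  have ane: "a \<noteq> {}" using a by auto
  have sp: "space (PiM a (\<lambda>_. D)) = space (PiM a (\<lambda>_. N))"
    by (simp add: space_PiM space_D)
  have ss: "sets (PiM {..<m} (\<lambda>_. D)) = sets (PiM {..<m} (\<lambda>_. N))"
    by (intro sets_PiM_cong) (auto simp: sets_D)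
  have tmN: "tt a \<in> measurable (PiM a (\<lambda>_. N)) (PiM {..<m} (\<lambda>_. N))"
    using tt_meas[OF fa, of N] a by simp
  have tmD: "tt a \<in> measurable (PiM a (\<lambda>_. D)) (PiM {..<m} (\<lambda>_. D))"
    using tt_meas[OF fa, of D] a by simp
  have "{\<omega> \<in> space M. W a \<omega> \<in> F} = V a -` (tt a -` F \<inter> space (PiM a (\<lambda>_. N))) \<inter> space M"
    using W_eq[OF a(1)] measurable_space[OF V_meas[OF a(1)]] by auto
  then have "prob {\<omega> \<in> space M. W a \<omega> \<in> F}
      = measure (distr M (PiM a (\<lambda>_. N)) (V a)) (tt a -` F \<inter> space (PiM a (\<lambda>_. N)))"
    using measurable_sets[OF tmN F] V_meas[OF a(1)] by (simp add: measure_distr)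
  also have "\<dots> = measure (PiM a (\<lambda>_. D)) (tt a -` F \<inter> space (PiM a (\<lambda>_. D)))"
    using distr_V[OF a(1) ane] sp by simp
  also have "\<dots> = measure (distr (PiM a (\<lambda>_. D)) (PiM {..<m} (\<lambda>_. D)) (tt a)) F"
    using tmD F ss by (simp add: measure_distr)
  also have "distr (PiM a (\<lambda>_. D)) (PiM {..<m} (\<lambda>_. D)) (tt a) = PiM {..<m} (\<lambda>_. D)"
  proof -
    have e: "tt a = (\<lambda>\<omega>. \<lambda>n\<in>{..<m}. \<omega> (sg a n))" using a(2) by (simp add: tt_def)
    show ?thesis unfolding e
      by (rule distr_PiM_reindex[of a "\<lambda>_. D" "sg a" "{..<m}"])
        (use D_prob sg_inj[OF fa] sg_in[OF fa] a(2) in auto)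
  qed
  finally show ?thesis .
qed


lemma evt_eq: "a \<subseteq> {1..n} \<Longrightarrow>
  V a -` (tt a -` F \<inter> space (PiM a (\<lambda>_. N))) \<inter> space M = {\<omega> \<in> space M. W a \<omega> \<in> F}"
  using W_eq[of a] measurable_space[OF V_meas[of a]] by auto

lemma tt_meas2: assumes "a \<subseteq> I" "finite a"
  shows "tt a \<in> measurable (PiM I (\<lambda>_. K)) (PiM {..<card a} (\<lambda>_. K))"
  unfolding tt_def
proof (rule measurable_restrict)
  fix i assume "i \<in> {..<card a}"
  then have "sg a i \<in> I" using sg_in[OF assms(2)] assms(1) by auto
  then show "(\<lambda>x. x (sg a i)) \<in> measurable (PiM I (\<lambda>_. K)) K"
    by (rule measurable_component_singleton)
qed

lemma prob_pair:
  assumes a: "a \<subseteq> {1..n}" "card a = m" and b: "b \<subseteq> {1..n}" "card b = m" and m: "m \<ge> 1"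
    and ab: "a \<inter> b = {}"
    and F: "F \<in> sets (PiM {..<m} (\<lambda>_. N))" and G: "G \<in> sets (PiM {..<m} (\<lambda>_. N))"
  shows "prob {\<omega> \<in> space M. W a \<omega> \<in> F \<and> W b \<omega> \<in> G}
       = measure (PiM {..<m} (\<lambda>_. D)) F * measure (PiM {..<m} (\<lambda>_. D)) G"
proof -
  have fa: "finite a" and fb: "finite b" using a b finite_subset by blast+
  have "indep_vars (\<lambda>j. PiM (case_bool a b j) (\<lambda>_. N))
          (\<lambda>j \<omega>. restrict (\<lambda>i. Z i \<omega>) (case_bool a b j)) UNIV"
    by (rule indep_vars_restrict[OF Z_indep])
      (use a b ab in \<open>auto simp: disjoint_family_on_def split: bool.split\<close>)
  then have ind: "indep_var (PiM a (\<lambda>_. N)) (V a) (PiM b (\<lambda>_. N)) (V b)"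
    unfolding indep_var_def
    by (rule indep_vars_cong[THEN iffD1, rotated -1]) (auto simp: V_def split: bool.split)
  have sa: "tt a -` F \<inter> space (PiM a (\<lambda>_. N)) \<in> sets (PiM a (\<lambda>_. N))"
    using measurable_sets[OF tt_meas[OF fa] ] F a by simp
  have sb: "tt b -` G \<inter> space (PiM b (\<lambda>_. N)) \<in> sets (PiM b (\<lambda>_. N))"
    using measurable_sets[OF tt_meas[OF fb] ] G b by simp
  have "{\<omega> \<in> space M. W a \<omega> \<in> F \<and> W b \<omega> \<in> G} =
     (\<lambda>x. (V a x, V b x)) -` ((tt a -` F \<inter> space (PiM a (\<lambda>_. N))) \<times> (tt b -` G \<inter> space (PiM b (\<lambda>_. N)))) \<inter> space M"
    using evt_eq[OF a(1), of F] evt_eq[OF b(1), of G] by auto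
  then have "prob {\<omega> \<in> space M. W a \<omega> \<in> F \<and> W b \<omega> \<in> G}
     = prob (V a -` (tt a -` F \<inter> space (PiM a (\<lambda>_. N))) \<inter> space M) *
       prob (V b -` (tt b -` G \<inter> space (PiM b (\<lambda>_. N))) \<inter> space M)"
    using indep_varD[OF ind sa sb] by simp
  also have "\<dots> = measure (PiM {..<m} (\<lambda>_. D)) F * measure (PiM {..<m} (\<lambda>_. D)) G"
    using evt_eq[OF a(1), of F] evt_eq[OF b(1), of G] prob_W[OF a m F] prob_W[OF b m G] by simp
  finally show ?thesis .
qed

end

locale cpl2 = cpl M N Z S n for M :: "'a measure" and N Z S n +
  fixes A :: "nat \<Rightarrow> 'a \<Rightarrow> nat set" and B :: nat
  assumes B1: "B \<ge> 1"
    and A_meas: "\<And>j. j \<in> {1..2*B} \<Longrightarrow> A j \<in> measurable M (count_space UNIV)"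
    and A_sub: "\<And>j \<omega>. j \<in> {1..2*B} \<Longrightarrow> \<omega> \<in> space M \<Longrightarrow> A j \<omega> \<subseteq> {1..n}"
    and A_card: "\<And>j \<omega>. j \<in> {1..2*B} \<Longrightarrow> \<omega> \<in> space M \<Longrightarrow> card (A j \<omega>) = n div 2"
    and A_disj: "\<And>j \<omega>. j \<in> {1..B} \<Longrightarrow> \<omega> \<in> space M \<Longrightarrow> A (2*j - 1) \<omega> \<inter> A (2*j) \<omega> = {}"
    and A_Z_indep: "indep_rv M
                      (PiM {1..n} (\<lambda>_. N)) (\<lambda>\<omega>. \<lambda>i\<in>{1..n}. Z i \<omega>)
                      (PiM {1..2*B} (\<lambda>_. count_space UNIV)) (\<lambda>\<omega>. \<lambda>j\<in>{1..2*B}. A j \<omega>)"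
begin

definition "X = (\<lambda>\<omega>. \<lambda>i\<in>{1..n}. Z i \<omega>)"
definition "Y = (\<lambda>\<omega>. \<lambda>j\<in>{1..2*B}. A j \<omega>)"

lemma X_meas: "X \<in> measurable M (PiM {1..n} (\<lambda>_. N))"
  unfolding X_def by (intro measurable_restrict Z_meas) auto

lemma Y_meas: "Y \<in> measurable M (PiM {1..2*B} (\<lambda>_. count_space UNIV))"
  unfolding Y_def by (intro measurable_restrict A_meas) auto

lemma m1: "n div 2 \<ge> 1" using n2 by auto

lemma mix:
  assumes j: "j \<in> {1..B}" and F: "F \<in> sets (PiM {..<n div 2} (\<lambda>_. N))"
  shows "prob {\<omega> \<in> space M. W (A (2*j-1) \<omega>) \<omega> \<in> F \<and> W (A (2*j) \<omega>) \<omega> \<in> F}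
     = (measure (PiM {..<n div 2} (\<lambda>_. D)) F)^2"
proof -
  define m where "m = n div 2"
  define q where "q = measure (PiM {..<m} (\<lambda>_. D)) F"
  define i1 where "i1 = 2*j - 1"
  define i2 where "i2 = 2*j"
  have i1: "i1 \<in> {1..2*B}" and i2: "i2 \<in> {1..2*B}" using j by (auto simp: i1_def i2_def)
  define Ps where "Ps = {ab. fst ab \<subseteq> {1..n} \<and> snd ab \<subseteq> {1..n} \<and> card (fst ab) = m \<and> card (snd ab) = m
                   \<and> fst ab \<inter> snd ab = {}}"
  have fPs: "finite Ps"
    by (rule finite_subset[of _ "Pow {1..n} \<times> Pow {1..n}"]) (auto simp: Ps_def)
  define H where "H ab = {\<omega> \<in> space M. A i1 \<omega> = fst ab \<and> A i2 \<omega> = snd ab \<and> W (fst ab) \<omega> \<in> F \<and> W (snd ab) \<omega> \<in> F}" for ab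
  define K where "K ab = {\<omega> \<in> space M. A i1 \<omega> = fst ab \<and> A i2 \<omega> = snd ab}" for ab
  define Ea where "Ea ab = {x \<in> space (PiM {1..n} (\<lambda>_. N)). tt (fst ab) x \<in> F \<and> tt (snd ab) x \<in> F}" for ab
  define Fa where "Fa ab = {y \<in> space (PiM {1..2*B} (\<lambda>_. count_space UNIV :: nat set measure)). y i1 = fst ab \<and> y i2 = snd ab}" for ab
  have Fa_sets: "Fa ab \<in> sets (PiM {1..2*B} (\<lambda>_. count_space UNIV))" for ab
    unfolding Fa_def using i1 i2 by measurable
  have Ea_sets: "Ea ab \<in> sets (PiM {1..n} (\<lambda>_. N))" if "ab \<in> Ps" for ab
  proof -
    have t1: "tt (fst ab) \<in> measurable (PiM {1..n} (\<lambda>_. N)) (PiM {..<m} (\<lambda>_. N))"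
      using tt_meas2[of "fst ab" "{1..n}" N] that finite_subset[of "fst ab" "{1..n}"] by (auto simp: Ps_def)
    have t2: "tt (snd ab) \<in> measurable (PiM {1..n} (\<lambda>_. N)) (PiM {..<m} (\<lambda>_. N))"
      using tt_meas2[of "snd ab" "{1..n}" N] that finite_subset[of "snd ab" "{1..n}"] by (auto simp: Ps_def)
    have "Ea ab = (tt (fst ab) -` F \<inter> space (PiM {1..n} (\<lambda>_. N))) \<inter> (tt (snd ab) -` F \<inter> space (PiM {1..n} (\<lambda>_. N)))"
      by (auto simp: Ea_def)
    then show ?thesis using measurable_sets[OF t1 F[folded m_def]] measurable_sets[OF t2 F[folded m_def]] by auto
  qed
  have ttX: "tt a (X \<omega>) = W a \<omega>" if "a \<subseteq> {1..n}" for a \<omega>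
  proof -
    have fa: "finite a" using that finite_subset by blast
    show ?thesis unfolding W_def tt_def X_def
    proof (intro restrict_ext)
      fix i assume "i \<in> {..<card a}"
      then have "sg a i \<in> {1..n}" using sg_in[OF fa] that by blast
      then show "(\<lambda>i\<in>{1..n}. Z i \<omega>) (sg a i) = Z (sg a i) \<omega>" by simp
    qed
  qed
  have HK: "H ab = X -` Ea ab \<inter> Y -` Fa ab \<inter> space M" if "ab \<in> Ps" for ab
    using that measurable_space[OF X_meas] measurable_space[OF Y_meas] i1 i2 ttX
    by (auto simp: H_def Ea_def Fa_def Ps_def Y_def)
  have KY: "K ab = Y -` Fa ab \<inter> space M" for ab
    using measurable_space[OF Y_meas] i1 i2 by (auto simp: K_def Fa_def Y_def)
  have XE: "X -` Ea ab \<inter> space M = {\<omega> \<in> space M. W (fst ab) \<omega> \<in> F \<and> W (snd ab) \<omega> \<in> F}" if "ab \<in> Ps" for ab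
    using that measurable_space[OF X_meas] ttX by (auto simp: Ea_def Ps_def)
  have Hm: "prob (H ab) = q^2 * prob (K ab)" if "ab \<in> Ps" for ab
  proof -
    have "prob (H ab) = prob (X -` Ea ab \<inter> space M) * prob (Y -` Fa ab \<inter> space M)"
      using A_Z_indep Ea_sets[OF that] Fa_sets unfolding HK[OF that] indep_rv_def X_def Y_def by blast
    also have "prob (X -` Ea ab \<inter> space M) = q^2"
      unfolding XE[OF that] q_def power2_eq_square
      by (rule prob_pair) (use that m1 F in \<open>auto simp: Ps_def m_def\<close>)
    finally show ?thesis by (simp add: KY)
  qed
  have Hs: "H ab \<in> events" if "ab \<in> Ps" for ab
  proof -
    have "X -` Ea ab \<inter> Y -` Fa ab \<inter> space M = (X -` Ea ab \<inter> space M) \<inter> (Y -` Fa ab \<inter> space M)" by blast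
    then show ?thesis unfolding HK[OF that]
      using measurable_sets[OF X_meas Ea_sets[OF that]] measurable_sets[OF Y_meas Fa_sets[of ab]]
      by (metis sets.Int)
  qed
  have Ks: "K ab \<in> events" for ab
    unfolding KY using measurable_sets[OF Y_meas Fa_sets] by auto
  have dH: "disjoint_family_on H Ps" and dK: "disjoint_family_on K Ps"
    by (auto simp: disjoint_family_on_def H_def K_def prod_eq_iff)
  have Aval: "(A i1 \<omega>, A i2 \<omega>) \<in> Ps" if "\<omega> \<in> space M" for \<omega>
    using A_sub[OF i1 that] A_sub[OF i2 that] A_card[OF i1 that] A_card[OF i2 that] A_disj[OF j that]
    by (simp add: Ps_def m_def i1_def i2_def)
  have GU: "{\<omega> \<in> space M. W (A i1 \<omega>) \<omega> \<in> F \<and> W (A i2 \<omega>) \<omega> \<in> F} = (\<Union>ab\<in>Ps. H ab)"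
    using Aval by (auto simp: H_def) (metis fst_conv snd_conv)
  have KU: "(\<Union>ab\<in>Ps. K ab) = space M"
    using Aval by (auto simp: K_def) (metis fst_conv snd_conv)
  have "prob {\<omega> \<in> space M. W (A i1 \<omega>) \<omega> \<in> F \<and> W (A i2 \<omega>) \<omega> \<in> F} = (\<Sum>ab\<in>Ps. prob (H ab))"
    unfolding GU using fPs Hs dH by (intro finite_measure_finite_Union) auto
  also have "\<dots> = q^2 * (\<Sum>ab\<in>Ps. prob (K ab))"
    using Hm by (simp add: sum_distrib_left)
  also have "(\<Sum>ab\<in>Ps. prob (K ab)) = prob (\<Union>ab\<in>Ps. K ab)"
    using fPs Ks dK by (intro finite_measure_finite_Union[symmetric]) auto
  also have "\<dots> = 1" unfolding KU by (rule prob_space)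
  finally show ?thesis by (simp add: q_def m_def i1_def i2_def)
qed

end

context cpl2
begin

definition "Fc k c = {z \<in> space (PiM {..<n div 2} (\<lambda>_. N)). (k \<in> S (n div 2) z) = c}"
definition "qc k c = measure (PiM {..<n div 2} (\<lambda>_. D)) (Fc k c)"
definition "Q c k j = {\<omega> \<in> space M. (k \<in> subsample_sel S Z (A j \<omega>) \<omega>) = c}"

lemma Fc_sets: "Fc k c \<in> sets (PiM {..<n div 2} (\<lambda>_. N))"
proof -
  have "Fc k c = (\<lambda>z. k \<in> S (n div 2) z) -` {c} \<inter> space (PiM {..<n div 2} (\<lambda>_. N))"
    by (auto simp: Fc_def)
  then show ?thesis using measurable_sets[OF S_meas[where m="n div 2" and k=k], of "{c}"] by simp
qed

lemma sel_Fc: assumes "a \<subseteq> {1..n}" "card a = n div 2" "\<omega> \<in> space M"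
  shows "((k \<in> subsample_sel S Z a \<omega>) = c) \<longleftrightarrow> W a \<omega> \<in> Fc k c"
  using measurable_space[OF W_meas[OF assms(1)] assms(3)] assms(2)
  by (simp add: sel_eq Fc_def)

lemma Q_alt: assumes "j \<in> {1..2*B}"
  shows "Q c k j = {\<omega> \<in> space M. W (A j \<omega>) \<omega> \<in> Fc k c}"
  using sel_Fc[OF A_sub[OF assms] A_card[OF assms]] by (auto simp: Q_def)

lemma Q_sets: assumes j: "j \<in> {1..2*B}" shows "Q c k j \<in> events"
proof -
  define Pa where "Pa = {a. a \<subseteq> {1..n} \<and> card a = n div 2}"
  have fPa: "finite Pa" by (rule finite_subset[of _ "Pow {1..n}"]) (auto simp: Pa_def)
  have "Q c k j = (\<Union>a\<in>Pa. (A j -` {a} \<inter> space M) \<inter> (W a -` Fc k c \<inter> space M))"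
    unfolding Q_alt[OF j] using A_sub[OF j] A_card[OF j] by (auto simp: Pa_def)
  moreover have "(A j -` {a} \<inter> space M) \<inter> (W a -` Fc k c \<inter> space M) \<in> events" if "a \<in> Pa" for a
  proof -
    have "A j -` {a} \<inter> space M \<in> events"
      using measurable_sets[OF A_meas[OF j], of "{a}"] by simp
    moreover have "W a \<in> measurable M (PiM {..<n div 2} (\<lambda>_. N))"
      using W_meas[of a] that by (simp add: Pa_def)
    then have "W a -` Fc k c \<inter> space M \<in> events"
      using measurable_sets Fc_sets by blast
    ultimately show ?thesis by blast
  qed
  ultimately show ?thesis using fPa by auto
qed

lemma prob_Q_pair: assumes j: "j \<in> {1..B}"
  shows "prob (Q c k (2*j-1) \<inter> Q c k (2*j)) = (qc k c)^2"
proof -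
  have j1: "2*j-1 \<in> {1..2*B}" and j2: "2*j \<in> {1..2*B}" using j by auto
  have "Q c k (2*j-1) \<inter> Q c k (2*j) = {\<omega> \<in> space M. W (A (2*j-1) \<omega>) \<omega> \<in> Fc k c \<and> W (A (2*j) \<omega>) \<omega> \<in> Fc k c}"
    unfolding Q_alt[OF j1] Q_alt[OF j2] by auto
  then show ?thesis using mix[OF j Fc_sets] by (simp add: qc_def)
qed

lemma qc_True: "qc k True = sel_prob M S Z k (n div 2)"
proof -
  have a: "{1..n div 2} \<subseteq> {1..n}" by auto
  have "sel_prob M S Z k (n div 2) = prob {\<omega> \<in> space M. W {1..n div 2} \<omega> \<in> Fc k True}"
    unfolding sel_prob_def using sel_Fc[OF a, of _ k True] by (intro arg_cong[where f=prob]) auto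
  also have "\<dots> = qc k True" unfolding qc_def by (rule prob_W[OF a _ m1 Fc_sets]) simp
  finally show ?thesis by simp
qed

lemma qc_False: "qc k False = 1 - sel_prob M S Z k (n div 2)"
proof -
  have a: "{1..n div 2} \<subseteq> {1..n}" by auto
  have ev: "{\<omega> \<in> space M. W {1..n div 2} \<omega> \<in> Fc k True} \<in> events"
  proof -
    have "W {1..n div 2} \<in> measurable M (PiM {..<n div 2} (\<lambda>_. N))" using W_meas[OF a] by simp
    then have "W {1..n div 2} -` Fc k True \<inter> space M \<in> events" using measurable_sets Fc_sets by blast
    moreover have "W {1..n div 2} -` Fc k True \<inter> space M = {\<omega> \<in> space M. W {1..n div 2} \<omega> \<in> Fc k True}" by auto
    ultimately show ?thesis by simp
  qed
  have "qc k False = prob {\<omega> \<in> space M. W {1..n div 2} \<omega> \<in> Fc k False}"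
    unfolding qc_def by (rule prob_W[OF a _ m1 Fc_sets, symmetric]) simp
  also have "{\<omega> \<in> space M. W {1..n div 2} \<omega> \<in> Fc k False} = space M - {\<omega> \<in> space M. W {1..n div 2} \<omega> \<in> Fc k True}"
    using sel_Fc[OF a, of _ k False] sel_Fc[OF a, of _ k True] by auto
  also have "prob \<dots> = 1 - qc k True"
    using prob_compl[OF ev] prob_W[OF a _ m1 Fc_sets, of k True] by (simp add: qc_def)
  finally show ?thesis by (simp add: qc_True)
qed


lemma ind_Q_True: "\<omega> \<in> space M \<Longrightarrow>
   (indicator (Q True k j) \<omega> :: real) = (if k \<in> subsample_sel S Z (A j \<omega>) \<omega> then 1 else 0)"
  by (simp add: Q_def indicator_def)

lemma ind_Q_False: "\<omega> \<in> space M \<Longrightarrow>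
   (indicator (Q False k j) \<omega> :: real) = 1 - indicator (Q True k j) \<omega>"
  by (simp add: Q_def indicator_def)

lemma ind01: "(indicator T x :: real) = 0 \<or> indicator T x = 1"
  by (simp add: indicator_def)

lemma pair_int:
  shows "integrable M (\<lambda>\<omega>. \<Sum>j=1..B. indicator (Q c k (2*j-1)) \<omega> * indicator (Q c k (2*j)) \<omega> :: real)"
    and "(\<integral>\<omega>. (\<Sum>j=1..B. indicator (Q c k (2*j-1)) \<omega> * indicator (Q c k (2*j)) \<omega> :: real) \<partial>M)
          = real B * (qc k c)^2"
proof -
  have ev: "Q c k (2*j-1) \<inter> Q c k (2*j) \<in> events" if "j \<in> {1..B}" for j
  proof -
    have "2*j-1 \<in> {1..2*B}" "2*j \<in> {1..2*B}" using that by auto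
    then show ?thesis using Q_sets by blast
  qed
  have eq: "(\<lambda>\<omega>. \<Sum>j=1..B. indicator (Q c k (2*j-1)) \<omega> * indicator (Q c k (2*j)) \<omega> :: real)
     = (\<lambda>\<omega>. \<Sum>j=1..B. indicator (Q c k (2*j-1) \<inter> Q c k (2*j)) \<omega>)"
    by (simp add: indicator_inter_arith)
  have ii: "integrable M (indicator (Q c k (2*j-1) \<inter> Q c k (2*j)) :: _ \<Rightarrow> real)" if "j \<in> {1..B}" for j
    using ev[OF that] emeasure_finite[of "Q c k (2*j-1) \<inter> Q c k (2*j)"]
    by (intro integrable_real_indicator) (simp_all add: less_top[symmetric])
  show "integrable M (\<lambda>\<omega>. \<Sum>j=1..B. indicator (Q c k (2*j-1)) \<omega> * indicator (Q c k (2*j)) \<omega> :: real)"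
    unfolding eq by (rule Bochner_Integration.integrable_sum) (rule ii)
  have "(\<integral>\<omega>. (\<Sum>j=1..B. indicator (Q c k (2*j-1) \<inter> Q c k (2*j)) \<omega> :: real) \<partial>M)
      = (\<Sum>j=1..B. \<integral>\<omega>. indicator (Q c k (2*j-1) \<inter> Q c k (2*j)) \<omega> \<partial>M)"
    by (rule Bochner_Integration.integral_sum) (rule ii)
  also have "\<dots> = (\<Sum>j=1..B. (qc k c)^2)"
  proof (rule sum.cong[OF refl])
    fix j assume j: "j \<in> {1..B}"
    have "Q c k (2*j-1) \<inter> Q c k (2*j) \<inter> space M = Q c k (2*j-1) \<inter> Q c k (2*j)"
      by (auto simp: Q_def)
    then show "(\<integral>\<omega>. indicator (Q c k (2*j-1) \<inter> Q c k (2*j)) \<omega> \<partial>M) = (qc k c)^2"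
      using prob_Q_pair[OF j, of c k] by simp
  qed
  finally show "(\<integral>\<omega>. (\<Sum>j=1..B. indicator (Q c k (2*j-1)) \<omega> * indicator (Q c k (2*j)) \<omega> :: real) \<partial>M)
          = real B * (qc k c)^2" unfolding eq by simp
qed

definition "gH k \<omega> = (\<Sum>j=1..2*B. indicator (Q True k j) \<omega>) / real (2*B)"

lemma Pi_hat_eq: "\<omega> \<in> space M \<Longrightarrow> Pi_hat S Z A B k \<omega> = gH k \<omega>"
  unfolding Pi_hat_def gH_def by (simp add: ind_Q_True)

lemma gH_meas: "gH k \<in> borel_measurable M"
  unfolding gH_def
  by (intro borel_measurable_divide borel_measurable_sum borel_measurable_indicator Q_sets borel_measurable_const)
     auto

lemma CP_sets: "{\<omega> \<in> space M. \<tau> \<le> gH k \<omega>} \<in> events"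
  using borel_measurable_le[OF borel_measurable_const gH_meas] by simp

lemma CN_sets: "{\<omega> \<in> space M. \<not> \<tau> \<le> gH k \<omega>} \<in> events"
proof -
  have "{\<omega> \<in> space M. \<not> \<tau> \<le> gH k \<omega>} = space M - {\<omega> \<in> space M. \<tau> \<le> gH k \<omega>}" by auto
  then show ?thesis using CP_sets by auto
qed

lemma bound_T: assumes t: "1/2 < \<tau>"
  shows "(\<integral>\<omega>. indicator {\<omega> \<in> space M. \<tau> \<le> gH k \<omega>} \<omega> \<partial>M) \<le> (qc k True)^2 / (2*\<tau> - 1)"
proof -
  define f where "f \<omega> = (\<Sum>j=1..B. indicator (Q True k (2*j-1)) \<omega> * indicator (Q True k (2*j)) \<omega> :: real)" for \<omega>
  have Bp: "real B > 0" using B1 by simp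
  have cp: "real B * (2*\<tau> - 1) > 0" using Bp t by simp
  have f0: "f \<omega> \<ge> 0" for \<omega> unfolding f_def by (intro sum_nonneg) (simp add: indicator_def)
  have pw: "indicator {\<omega> \<in> space M. \<tau> \<le> gH k \<omega>} \<omega> \<le> f \<omega> / (real B * (2*\<tau> - 1))" if w: "\<omega> \<in> space M" for \<omega>
  proof (cases "\<tau> \<le> gH k \<omega>")
    case True
    have c: "(\<Sum>j=1..2*B. indicator (Q True k j) \<omega>) \<le> real B + f \<omega>"
      unfolding f_def by (rule comb_ineq) (rule ind01)
    have "\<tau> * real (2*B) \<le> (\<Sum>j=1..2*B. indicator (Q True k j) \<omega>)"
      using True Bp by (simp add: gH_def pos_le_divide_eq)
    then have "real B * (2*\<tau> - 1) \<le> f \<omega>" using c by (simp add: algebra_simps)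
    then show ?thesis using True w cp by (simp add: le_divide_eq)
  next
    case False
    then show ?thesis using f0 cp by simp
  qed
  have "(\<integral>\<omega>. indicator {\<omega> \<in> space M. \<tau> \<le> gH k \<omega>} \<omega> \<partial>M) \<le> (\<integral>\<omega>. f \<omega> / (real B * (2*\<tau> - 1)) \<partial>M)"
  proof (rule integral_mono[OF _ _ pw])
    show "integrable M (indicator {\<omega> \<in> space M. \<tau> \<le> gH k \<omega>} :: _ \<Rightarrow> real)"
      using CP_sets[of \<tau> k] emeasure_finite[of "{\<omega> \<in> space M. \<tau> \<le> gH k \<omega>}"]
      by (intro integrable_real_indicator) (simp_all add: less_top[symmetric])
    show "integrable M (\<lambda>\<omega>. f \<omega> / (real B * (2*\<tau> - 1)))"
      unfolding f_def by (rule integrable_divide_zero[OF pair_int(1)])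
  qed
  also have "\<dots> = real B * (qc k True)^2 / (real B * (2*\<tau> - 1))"
    using pair_int(2)[of True k] by (simp add: f_def)
  also have "\<dots> = (qc k True)^2 / (2*\<tau> - 1)" using Bp by simp
  finally show ?thesis .
qed

lemma bound_F: assumes t: "\<tau> < 1/2"
  shows "(\<integral>\<omega>. indicator {\<omega> \<in> space M. \<not> \<tau> \<le> gH k \<omega>} \<omega> \<partial>M) \<le> (qc k False)^2 / (1 - 2*\<tau>)"
proof -
  define f where "f \<omega> = (\<Sum>j=1..B. indicator (Q False k (2*j-1)) \<omega> * indicator (Q False k (2*j)) \<omega> :: real)" for \<omega>
  have Bp: "real B > 0" using B1 by simp
  have cp: "real B * (1 - 2*\<tau>) > 0" using Bp t by simp
  have f0: "f \<omega> \<ge> 0" for \<omega> unfolding f_def by (intro sum_nonneg) (simp add: indicator_def)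
  have pw: "indicator {\<omega> \<in> space M. \<not> \<tau> \<le> gH k \<omega>} \<omega> \<le> f \<omega> / (real B * (1 - 2*\<tau>))" if w: "\<omega> \<in> space M" for \<omega>
  proof (cases "\<tau> \<le> gH k \<omega>")
    case False
    have c: "(\<Sum>j=1..2*B. indicator (Q False k j) \<omega>) \<le> real B + f \<omega>"
      unfolding f_def by (rule comb_ineq) (rule ind01)
    have s: "(\<Sum>j=1..2*B. indicator (Q False k j) \<omega>) = real (2*B) - (\<Sum>j=1..2*B. indicator (Q True k j) \<omega> :: real)"
      using w by (simp add: ind_Q_False sum_subtractf)
    have "(\<Sum>j=1..2*B. indicator (Q True k j) \<omega>) < \<tau> * real (2*B)"
      proof -
      have "(\<Sum>j=1..2*B. indicator (Q True k j) \<omega>) / (2 * real B) < \<tau>" using False by (simp add: gH_def not_le)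
      then show ?thesis using Bp by (simp add: pos_divide_less_eq)
    qed
    then have "real B * (1 - 2*\<tau>) \<le> f \<omega>" using c s by (simp add: algebra_simps)
    then show ?thesis using False w cp by (simp add: le_divide_eq)
  next
    case True
    then show ?thesis using f0 cp by simp
  qed
  have "(\<integral>\<omega>. indicator {\<omega> \<in> space M. \<not> \<tau> \<le> gH k \<omega>} \<omega> \<partial>M) \<le> (\<integral>\<omega>. f \<omega> / (real B * (1 - 2*\<tau>)) \<partial>M)"
  proof (rule integral_mono[OF _ _ pw])
    show "integrable M (indicator {\<omega> \<in> space M. \<not> \<tau> \<le> gH k \<omega>} :: _ \<Rightarrow> real)"
      using CN_sets[of \<tau> k] emeasure_finite[of "{\<omega> \<in> space M. \<not> \<tau> \<le> gH k \<omega>}"]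
      by (intro integrable_real_indicator) (simp_all add: less_top[symmetric])
    show "integrable M (\<lambda>\<omega>. f \<omega> / (real B * (1 - 2*\<tau>)))"
      unfolding f_def by (rule integrable_divide_zero[OF pair_int(1)])
  qed
  also have "\<dots> = real B * (qc k False)^2 / (real B * (1 - 2*\<tau>))"
    using pair_int(2)[of False k] by (simp add: f_def)
  also have "\<dots> = (qc k False)^2 / (1 - 2*\<tau>)" using Bp by simp
  finally show ?thesis .
qed


lemma R_sets: "{\<omega> \<in> space M. k \<in> subsample_sel S Z {1..n div 2} \<omega>} \<in> events"
proof -
  have a: "{1..n div 2} \<subseteq> {1..n}" by auto
  have "W {1..n div 2} \<in> measurable M (PiM {..<n div 2} (\<lambda>_. N))" using W_meas[OF a] by simp
  then have "W {1..n div 2} -` Fc k True \<inter> space M \<in> events" using measurable_sets Fc_sets by blast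
  moreover have "W {1..n div 2} -` Fc k True \<inter> space M = {\<omega> \<in> space M. k \<in> subsample_sel S Z {1..n div 2} \<omega>}"
    using sel_Fc[OF a, of _ k True] by auto
  ultimately show ?thesis by simp
qed

lemma ind_int: "A' \<in> events \<Longrightarrow> integrable M (indicator A' :: _ \<Rightarrow> real)"
  using emeasure_finite[of A'] by (intro integrable_real_indicator) (simp_all add: less_top[symmetric])

lemma qc_nonneg: "qc k c \<ge> 0" by (simp add: qc_def)

lemma main_i:
  assumes t: "\<tau> \<in> {1/2<..1}" and th: "0 \<le> \<theta>"
  shows "(\<integral>\<omega>. real (card (cpss p S Z A B \<tau> \<omega> \<inter> L_set M S Z n p \<theta>)) \<partial>M)
            \<le> \<theta> / (2*\<tau> - 1) *
              (\<integral>\<omega>. real (card (subsample_sel S Z {1..n div 2} \<omega> \<inter> L_set M S Z n p \<theta>)) \<partial>M)"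
proof -
  define L where "L = L_set M S Z n p \<theta>"
  have fL: "finite L" and Lp: "L \<subseteq> {1..p}" by (auto simp: L_def L_set_def)
  have tp: "2*\<tau> - 1 > 0" using t by auto
  define CP where "CP k = {\<omega> \<in> space M. \<tau> \<le> gH k \<omega>}" for k
  define R where "R k = {\<omega> \<in> space M. k \<in> subsample_sel S Z {1..n div 2} \<omega>}" for k
  have e1: "(\<integral>\<omega>. real (card (cpss p S Z A B \<tau> \<omega> \<inter> L)) \<partial>M) = (\<integral>\<omega>. (\<Sum>k\<in>L. indicator (CP k) \<omega>) \<partial>M)"
  proof (rule Bochner_Integration.integral_cong[OF refl])
    fix \<omega> assume w: "\<omega> \<in> space M"
    show "real (card (cpss p S Z A B \<tau> \<omega> \<inter> L)) = (\<Sum>k\<in>L. indicator (CP k) \<omega>)"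
      unfolding card_ind[OF fL]
    proof (rule sum.cong[OF refl])
      fix k assume "k \<in> L"
      then have kp: "k \<in> {1..p}" using Lp by blast
      show "(if k \<in> cpss p S Z A B \<tau> \<omega> then 1 else 0) = indicator (CP k) \<omega>"
        using kp w by (simp add: cpss_def CP_def indicator_def Pi_hat_eq[OF w])
    qed
  qed
  also have "\<dots> = (\<Sum>k\<in>L. \<integral>\<omega>. indicator (CP k) \<omega> \<partial>M)"
    by (rule Bochner_Integration.integral_sum) (simp add: CP_def ind_int CP_sets)
  also have "\<dots> \<le> (\<Sum>k\<in>L. (qc k True)^2 / (2*\<tau> - 1))"
    by (rule sum_mono) (unfold CP_def, rule bound_T, use t in simp)
  also have "\<dots> \<le> (\<Sum>k\<in>L. \<theta> * qc k True / (2*\<tau> - 1))"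
  proof (rule sum_mono)
    fix k assume k: "k \<in> L"
    have "qc k True \<le> \<theta>" using k by (simp add: L_def L_set_def qc_True)
    then have "(qc k True)^2 \<le> \<theta> * qc k True"
      using qc_nonneg[of k True] by (simp add: power2_eq_square mult_right_mono)
    then show "(qc k True)^2 / (2*\<tau> - 1) \<le> \<theta> * qc k True / (2*\<tau> - 1)"
      using tp by (simp add: divide_right_mono)
  qed
  also have "\<dots> = \<theta> / (2*\<tau> - 1) * (\<Sum>k\<in>L. qc k True)"
    by (simp add: sum_distrib_left)
  also have "(\<Sum>k\<in>L. qc k True) = (\<integral>\<omega>. real (card (subsample_sel S Z {1..n div 2} \<omega> \<inter> L)) \<partial>M)"
  proof -
    have "(\<integral>\<omega>. real (card (subsample_sel S Z {1..n div 2} \<omega> \<inter> L)) \<partial>M) = (\<integral>\<omega>. (\<Sum>k\<in>L. indicator (R k) \<omega>) \<partial>M)"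
      by (rule Bochner_Integration.integral_cong[OF refl]) (simp add: card_ind[OF fL] R_def indicator_def of_bool_def)
    also have "\<dots> = (\<Sum>k\<in>L. \<integral>\<omega>. indicator (R k) \<omega> \<partial>M)"
      by (rule Bochner_Integration.integral_sum) (unfold R_def, rule ind_int, rule R_sets)
    also have "\<dots> = (\<Sum>k\<in>L. qc k True)"
    proof (rule sum.cong[OF refl])
      fix k
      have RR: "R k \<inter> space M = R k" by (auto simp: R_def)
      have "(\<integral>\<omega>. indicator (R k) \<omega> \<partial>M) = prob (R k)" using RR by simp
      then show "(\<integral>\<omega>. indicator (R k) \<omega> \<partial>M) = qc k True" by (simp add: qc_True sel_prob_def R_def)
    qed
    finally show ?thesis by simp
  qed
  finally show ?thesis by (simp add: L_def)
qed

lemma main_ii: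
  assumes t: "\<tau> \<in> {0..<1/2}" and th: "\<theta> \<le> 1"
  shows "(\<integral>\<omega>. real (card (({1..p} - cpss p S Z A B \<tau> \<omega>) \<inter> H_set M S Z n p \<theta>)) \<partial>M)
            \<le> (1 - \<theta>) / (1 - 2*\<tau>) *
              (\<integral>\<omega>. real (card (({1..p} - subsample_sel S Z {1..n div 2} \<omega>) \<inter> H_set M S Z n p \<theta>)) \<partial>M)"
proof -
  define L where "L = H_set M S Z n p \<theta>"
  have fL: "finite L" and Lp: "L \<subseteq> {1..p}" by (auto simp: L_def H_set_def)
  have tp: "1 - 2*\<tau> > 0" using t by auto
  define CP where "CP k = {\<omega> \<in> space M. \<not> \<tau> \<le> gH k \<omega>}" for k
  define R where "R k = space M - {\<omega> \<in> space M. k \<in> subsample_sel S Z {1..n div 2} \<omega>}" for k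
  have e1: "(\<integral>\<omega>. real (card (({1..p} - cpss p S Z A B \<tau> \<omega>) \<inter> L)) \<partial>M) = (\<integral>\<omega>. (\<Sum>k\<in>L. indicator (CP k) \<omega>) \<partial>M)"
  proof (rule Bochner_Integration.integral_cong[OF refl])
    fix \<omega> assume w: "\<omega> \<in> space M"
    show "real (card (({1..p} - cpss p S Z A B \<tau> \<omega>) \<inter> L)) = (\<Sum>k\<in>L. indicator (CP k) \<omega>)"
      unfolding card_ind[OF fL]
    proof (rule sum.cong[OF refl])
      fix k assume "k \<in> L"
      then have kp: "k \<in> {1..p}" using Lp by blast
      show "(if k \<in> {1..p} - cpss p S Z A B \<tau> \<omega> then 1 else 0) = indicator (CP k) \<omega>"
        using kp w by (simp add: cpss_def CP_def indicator_def Pi_hat_eq[OF w])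
    qed
  qed
  also have "\<dots> = (\<Sum>k\<in>L. \<integral>\<omega>. indicator (CP k) \<omega> \<partial>M)"
    by (rule Bochner_Integration.integral_sum) (simp add: CP_def ind_int CN_sets)
  also have "\<dots> \<le> (\<Sum>k\<in>L. (qc k False)^2 / (1 - 2*\<tau>))"
    by (rule sum_mono) (unfold CP_def, rule bound_F, use t in simp)
  also have "\<dots> \<le> (\<Sum>k\<in>L. (1 - \<theta>) * qc k False / (1 - 2*\<tau>))"
  proof (rule sum_mono)
    fix k assume k: "k \<in> L"
    have "qc k False \<le> 1 - \<theta>" using k by (simp add: L_def H_set_def qc_False)
    then have "(qc k False)^2 \<le> (1 - \<theta>) * qc k False"
      using qc_nonneg[of k False] by (simp add: power2_eq_square mult_right_mono)
    then show "(qc k False)^2 / (1 - 2*\<tau>) \<le> (1 - \<theta>) * qc k False / (1 - 2*\<tau>)"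
      using tp by (simp add: divide_right_mono)
  qed
  also have "\<dots> = (1 - \<theta>) / (1 - 2*\<tau>) * (\<Sum>k\<in>L. qc k False)"
    by (simp add: sum_distrib_left)
  also have "(\<Sum>k\<in>L. qc k False) = (\<integral>\<omega>. real (card (({1..p} - subsample_sel S Z {1..n div 2} \<omega>) \<inter> L)) \<partial>M)"
  proof -
    have "(\<integral>\<omega>. real (card (({1..p} - subsample_sel S Z {1..n div 2} \<omega>) \<inter> L)) \<partial>M) = (\<integral>\<omega>. (\<Sum>k\<in>L. indicator (R k) \<omega>) \<partial>M)"
    proof (rule Bochner_Integration.integral_cong[OF refl])
      fix \<omega> assume w: "\<omega> \<in> space M"
      show "real (card (({1..p} - subsample_sel S Z {1..n div 2} \<omega>) \<inter> L)) = (\<Sum>k\<in>L. indicator (R k) \<omega>)"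
        unfolding card_ind[OF fL]
        by (rule sum.cong[OF refl]) (use w Lp in \<open>auto simp: R_def indicator_def\<close>)
    qed
    also have "\<dots> = (\<Sum>k\<in>L. \<integral>\<omega>. indicator (R k) \<omega> \<partial>M)"
      by (rule Bochner_Integration.integral_sum) (unfold R_def, rule ind_int, rule sets.Diff[OF sets.top R_sets])
    also have "\<dots> = (\<Sum>k\<in>L. qc k False)"
    proof (rule sum.cong[OF refl])
      fix k
      have RR: "R k \<inter> space M = R k" by (auto simp: R_def)
      have "(\<integral>\<omega>. indicator (R k) \<omega> \<partial>M) = prob (R k)" using RR by simp
      also have "\<dots> = 1 - sel_prob M S Z k (n div 2)"
        unfolding R_def using prob_compl[OF R_sets[of k]] by (simp add: sel_prob_def)
      finally show "(\<integral>\<omega>. indicator (R k) \<omega> \<partial>M) = qc k False" by (simp add: qc_False)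
    qed
    finally show ?thesis by simp
  qed
  finally show ?thesis by (simp add: L_def)
qed

end

theorem theorem1:
  fixes M :: "'a measure" and N :: "'b measure"
    and Z :: "nat \<Rightarrow> 'a \<Rightarrow> 'b"
    and S :: "nat \<Rightarrow> (nat \<Rightarrow> 'b) \<Rightarrow> nat set"
    and A :: "nat \<Rightarrow> 'a \<Rightarrow> nat set"
    and n p B :: nat and \<theta> \<tau> :: real
  assumes M: "prob_space M"
    and n: "n \<ge> 2" and p: "p \<ge> 1" and B: "B \<ge> 1"
    and \<theta>: "0 \<le> \<theta>" "\<theta> \<le> 1"
    \<comment> \<open>Z_1,...,Z_n i.i.d.\<close>
    and Z_meas: "\<And>i. i \<in> {1..n} \<Longrightarrow> Z i \<in> measurable M N"
    and Z_indep: "prob_space.indep_vars M (\<lambda>_. N) Z {1..n}"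
    and Z_ident: "\<And>i. i \<in> {1..n} \<Longrightarrow> distr M N (Z i) = distr M N (Z 1)"
    \<comment> \<open>selection procedure: measurable statistics with values in subsets of {1..p}\<close>
    and S_range: "\<And>m z. S m z \<subseteq> {1..p}"
    and S_meas: "\<And>m k. (\<lambda>z. k \<in> S m z) \<in> measurable (PiM {..<m} (\<lambda>_. N)) (count_space UNIV)"
    \<comment> \<open>random complementary pairs of subsets of size floor(n/2)\<close>
    and A_meas: "\<And>j. j \<in> {1..2*B} \<Longrightarrow> A j \<in> measurable M (count_space UNIV)"
    and A_sub: "\<And>j \<omega>. j \<in> {1..2*B} \<Longrightarrow> \<omega> \<in> space M \<Longrightarrow> A j \<omega> \<subseteq> {1..n}"
    and A_card: "\<And>j \<omega>. j \<in> {1..2*B} \<Longrightarrow> \<omega> \<in> space M \<Longrightarrow> card (A j \<omega>) = n div 2"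
    and A_disj: "\<And>j \<omega>. j \<in> {1..B} \<Longrightarrow> \<omega> \<in> space M \<Longrightarrow> A (2*j - 1) \<omega> \<inter> A (2*j) \<omega> = {}"
    and A_pairs_indep: "prob_space.indep_vars M (\<lambda>_. count_space UNIV)
                          (\<lambda>j \<omega>. (A (2*j - 1) \<omega>, A (2*j) \<omega>)) {1..B}"
    and A_Z_indep: "indep_rv M
                      (PiM {1..n} (\<lambda>_. N)) (\<lambda>\<omega>. \<lambda>i\<in>{1..n}. Z i \<omega>)
                      (PiM {1..2*B} (\<lambda>_. count_space UNIV)) (\<lambda>\<omega>. \<lambda>j\<in>{1..2*B}. A j \<omega>)"
  shows "(\<tau> \<in> {1/2<..1} \<longrightarrow>
            (\<integral>\<omega>. real (card (cpss p S Z A B \<tau> \<omega> \<inter> L_set M S Z n p \<theta>)) \<partial>M)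
            \<le> \<theta> / (2*\<tau> - 1) *
              (\<integral>\<omega>. real (card (subsample_sel S Z {1..n div 2} \<omega> \<inter> L_set M S Z n p \<theta>)) \<partial>M))
       \<and> (\<tau> \<in> {0..<1/2} \<longrightarrow>
            (\<integral>\<omega>. real (card (({1..p} - cpss p S Z A B \<tau> \<omega>) \<inter> H_set M S Z n p \<theta>)) \<partial>M)
            \<le> (1 - \<theta>) / (1 - 2*\<tau>) *
              (\<integral>\<omega>. real (card (({1..p} - subsample_sel S Z {1..n div 2} \<omega>) \<inter> H_set M S Z n p \<theta>)) \<partial>M))"
proof -
  have "cpl2 M N Z S n A B"
    unfolding cpl2_def cpl2_axioms_def cpl_def cpl_axioms_def
    using M n Z_meas Z_indep Z_ident S_meas B A_meas A_sub A_card A_disj A_Z_indep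
    by (intro conjI) blast+
  then interpret cpl2 M N Z S n A B .
  show ?thesis using main_i[of \<tau> \<theta> p] main_ii[of \<tau> \<theta> p] \<theta> by blast
qed

end
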